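(* Let $Q=[(n_1,q_1),\dots,(n_m,q_m)]$ be a compatible pointed irregular type and $g=(\pi,\mathbf d)\in G$. Then $g\cdot Q$ is an admissible deformation of $Q$ with $\mathrm{slope}\le K$, i.e. $g\cdot Q=Q_{\mathbf a}$ for some $\mathbf a\in\mathbf B(Q)$, if and only if $g\in W(Q)$, i.e. $d_i\equiv d_j\pmod{r_{ij}}$ for all $i,j$.
   Context: Exponential factors: finite sums $q=\sum_ka_kx^k$, $a_k\in\mathbb C$, $k\in\mathbb Q_{>0}$; $E(q)$ = exponents with nonzero coefficient; $\mathrm{slope}(q)=\max E(q)$; $\mathrm{ram}(q)$ = least $r\ge1$ with $q\in x^{1/r}\mathbb C[x^{1/r}]$. Galois operator $\sigma(\sum a_kx^k)=\sum a_ke^{-2\pi\sqrt{-1}k}x^k$; Stokes circle $\langle q\rangle=\{\sigma^i(q)\}$. Truncation $\tau_k(\sum a_{k'}x^{k'})=\sum_{k'\ge k}a_{k'}x^{k'}$. $\mathrm{Levels}(q)=\{\mathrm{slope}(q-\sigma^i(q))\}\setminus\{0\}$. Common part/fission exponent for $q,\hat q$ in distinct orbits: with $k$ the smallest element of $E(q)$ with $\langle\tau_k(q)\rangle=\langle\tau_k(\hat q)\rangle$ (if any) $q_c=\tau_k(q)$, $\hat q_c=\tau_k(\hat q)$, else $0$; $f_{q,\hat q}=\max(\mathrm{slope}(q-q_c),\mathrm{slope}(\hat q-\hat q_c))$. Pointed irregular type $Q=[(n_1,q_1),\dots,(n_m,q_m)]$: $n_i\in\mathbb N_{>0}$, $q_i$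 in distinct orbits; compatible if $\langle\tau_k(q_i)\rangle=\langle\tau_k(q_j)\rangle\Rightarrow\tau_k(q_i)=\tau_k(q_j)$. $Q'\sim Q$ means same length and multiplicities and $\mathrm{slope}(\sigma^k(q'_i)-\sigma^l(q'_j))=\mathrm{slope}(\sigma^k(q_i)-\sigma^l(q_j))$ for all $i,j$, $0\le k\le\mathrm{ram}(q_i)$, $0\le l\le\mathrm{ram}(q_j)$. $r=\mathrm{lcm}\,\mathrm{ram}(q_i)$, $K=\max\mathrm{slope}(q_i)$, $s=rK$, $Q_{\mathbf a}=[(n_i,\sum_{j=1}^sa_{i,j}x^{j/r})]$, $\mathbf B(Q)=\{\mathbf a\in\mathbb C^{ms}:Q_{\mathbf a}\sim Q\}$. Weyl group: let $r_i=\mathrm{ram}(q_i)$; for $i\ne j$ let $r_{ij}=\mathrm{ram}(q_c)$ where $q_c$ is the common part of $q_i,q_j$ (so $r_{ij}\mid r_i,r_j$), and $r_{ii}=r_i$. Let $\mathrm{Aut}(Q)$ be the group of permutations $\pi$ of $\{1,\dots,m\}$ with $n_{\pi(i)}=n_i$, $\mathrm{Levels}(q_{\pi(i)})=\mathrm{Levels}(q_i)$ and $f_{q_{\pi(i)},q_{\pi(j)}}=f_{q_i,q_j}$ for all $i\ne j$ (this is the automorphism group of the fission tree; such $\pi$ satisfy $r_{\pi(i)}=r_i$). Let $G=\mathrm{Aut}(Q)\ltimes\prod_{i=1}^m\mathbb Z/r_i\mathbb Z$ (with $\mathrm{Aut}(Q)$ permuting the factors), acting on lists of the same shape by $(\pi,\mathbf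 d)\cdot[(n_1,p_1),\dots,(n_m,p_m)]=[(n_{\pi(1)},\sigma^{d_{\pi(1)}}(p_{\pi(1)})),\dots,(n_{\pi(m)},\sigma^{d_{\pi(m)}}(p_{\pi(m)}))]$. The Weyl group is $W(Q)=\{(\pi,\mathbf d)\in G:d_i\equiv d_j\bmod r_{ij}\ \forall i,j\}$. *)

theory Defs
  imports Complex_Main "HOL-Library.Function_Algebras" "HOL-Combinatorics.Permutations" "HOL-Number_Theory.Cong"
begin

text \<open>An exponential factor q = sum_k a_k x^k (finite sum, k positive rational, a_k complex)
  is represented by its coefficient function rat => complex.\<close>

type_synonym expfac = "rat \<Rightarrow> complex"

definition is_expfac :: "expfac \<Rightarrow> bool" where
  "is_expfac q \<longleftrightarrow> finite {k. q k \<noteq> 0} \<and> (\<forall>k. q k \<noteq> 0 \<longrightarrow> k > 0)"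

definition expo :: "expfac \<Rightarrow> rat set" where
  "expo q = {k. q k \<noteq> 0}"

definition slope :: "expfac \<Rightarrow> rat" where
  "slope q = (if expo q = {} then 0 else Max (expo q))"

definition ram :: "expfac \<Rightarrow> nat" where
  "ram q = (LEAST r::nat. r \<ge> 1 \<and> (\<forall>k\<in>expo q. k * of_nat r \<in> \<int>))"

definition sigma :: "expfac \<Rightarrow> expfac" where
  "sigma q = (\<lambda>k. cis (- 2 * pi * real_of_rat k) * q k)"

definition stokes :: "expfac \<Rightarrow> expfac set" where
  "stokes q = range (\<lambda>i::nat. (sigma ^^ i) q)"

definition trunc :: "rat \<Rightarrow> expfac \<Rightarrow> expfac" where
  "trunc k q = (\<lambda>k'. if k \<le> k' then q k' else 0)"

definition levels :: "expfac \<Rightarrow> rat set" where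
  "levels q = {slope (q - (sigma ^^ i) q) | i::nat. True} - {0}"

definition common_part :: "expfac \<Rightarrow> expfac \<Rightarrow> expfac \<times> expfac" where
  "common_part q qh =
     (let S = {k \<in> expo q. stokes (trunc k q) = stokes (trunc k qh)}
      in if S = {} then (0, 0) else (trunc (Min S) q, trunc (Min S) qh))"

definition fission_exp :: "expfac \<Rightarrow> expfac \<Rightarrow> rat" where
  "fission_exp q qh =
     max (slope (q - fst (common_part q qh))) (slope (qh - snd (common_part q qh)))"

text \<open>Q = [(n_1,q_1),...,(n_m,q_m)] as a list (indices 0..m-1).\<close>
type_synonym pit = "(nat \<times> expfac) list"

definition pointed_irr_type :: "pit \<Rightarrow> bool" where
  "pointed_irr_type Q \<longleftrightarrow>
     (\<forall>i<length Q. fst (Q ! i) > 0 \<and> is_expfac (snd (Q ! i))) \<and>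
     (\<forall>i<length Q. \<forall>j<length Q. i \<noteq> j \<longrightarrow> stokes (snd (Q ! i)) \<noteq> stokes (snd (Q ! j)))"

definition compatible :: "pit \<Rightarrow> bool" where
  "compatible Q \<longleftrightarrow> pointed_irr_type Q \<and>
     (\<forall>i<length Q. \<forall>j<length Q. \<forall>k.
        stokes (trunc k (snd (Q ! i))) = stokes (trunc k (snd (Q ! j))) \<longrightarrow>
        trunc k (snd (Q ! i)) = trunc k (snd (Q ! j)))"

definition pit_equiv :: "pit \<Rightarrow> pit \<Rightarrow> bool" where
  "pit_equiv Q' Q \<longleftrightarrow> length Q' = length Q \<and>
     (\<forall>i<length Q. fst (Q' ! i) = fst (Q ! i)) \<and>
     (\<forall>i<length Q. \<forall>j<length Q. \<forall>k\<le>ram (snd (Q ! i)). \<forall>l\<le>ram (snd (Q ! j)).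
        slope ((sigma ^^ k) (snd (Q' ! i)) - (sigma ^^ l) (snd (Q' ! j))) =
        slope ((sigma ^^ k) (snd (Q ! i)) - (sigma ^^ l) (snd (Q ! j))))"

definition ramQ :: "pit \<Rightarrow> nat" where
  "ramQ Q = Lcm (set (map (\<lambda>p. ram (snd p)) Q))"

definition maxslope :: "pit \<Rightarrow> rat" where
  "maxslope Q = (if Q = [] then 0 else Max (set (map (\<lambda>p. slope (snd p)) Q)))"

definition sQ :: "pit \<Rightarrow> nat" where
  "sQ Q = nat \<lfloor>of_nat (ramQ Q) * maxslope Q\<rfloor>"

definition monom_ef :: "complex \<Rightarrow> rat \<Rightarrow> expfac" where
  "monom_ef c e = (\<lambda>k. if k = e then c else 0)"

text \<open>Q_a = [(n_i, sum_{j=1}^s a_{i,j} x^{j/r})]; a is indexed by i < m (0-based) and 1 <= j <= s.\<close>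
definition Q_a :: "pit \<Rightarrow> (nat \<Rightarrow> nat \<Rightarrow> complex) \<Rightarrow> pit" where
  "Q_a Q a = map (\<lambda>i. (fst (Q ! i),
       (\<Sum>j\<in>{1..sQ Q}. monom_ef (a i j) (of_nat j / of_nat (ramQ Q))))) [0..<length Q]"

definition BQ :: "pit \<Rightarrow> (nat \<Rightarrow> nat \<Rightarrow> complex) set" where
  "BQ Q = {a. pit_equiv (Q_a Q a) Q}"

definition rr :: "pit \<Rightarrow> nat \<Rightarrow> nat \<Rightarrow> nat" where
  "rr Q i j = (if i = j then ram (snd (Q ! i))
               else ram (fst (common_part (snd (Q ! i)) (snd (Q ! j)))))"

definition AutQ :: "pit \<Rightarrow> (nat \<Rightarrow> nat) set" where
  "AutQ Q = {\<pi>. \<pi> permutes {..<length Q} \<and>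
     (\<forall>i<length Q. fst (Q ! \<pi> i) = fst (Q ! i) \<and>
                   levels (snd (Q ! \<pi> i)) = levels (snd (Q ! i))) \<and>
     (\<forall>i<length Q. \<forall>j<length Q. i \<noteq> j \<longrightarrow>
        fission_exp (snd (Q ! \<pi> i)) (snd (Q ! \<pi> j)) = fission_exp (snd (Q ! i)) (snd (Q ! j)))}"

text \<open>G = Aut(Q) semidirect prod_i Z/r_i Z; an element is (pi, d) with d_i in {0..<r_i}
  (canonical representatives), d_i = 0 for i >= m.\<close>
definition GQ :: "pit \<Rightarrow> ((nat \<Rightarrow> nat) \<times> (nat \<Rightarrow> nat)) set" where
  "GQ Q = {(\<pi>, d). \<pi> \<in> AutQ Q \<and> (\<forall>i<length Q. d i < ram (snd (Q ! i))) \<and>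
                   (\<forall>i\<ge>length Q. d i = 0)}"

definition act :: "(nat \<Rightarrow> nat) \<times> (nat \<Rightarrow> nat) \<Rightarrow> pit \<Rightarrow> pit" where
  "act g P = map (\<lambda>i. (fst (P ! fst g i), (sigma ^^ (snd g (fst g i))) (snd (P ! fst g i))))
                 [0..<length P]"

definition WQ :: "pit \<Rightarrow> ((nat \<Rightarrow> nat) \<times> (nat \<Rightarrow> nat)) set" where
  "WQ Q = {(\<pi>, d) \<in> GQ Q. \<forall>i<length Q. \<forall>j<length Q. [d i = d j] (mod rr Q i j)}"

end

theory Submission
  imports Defs
begin

abbreviation II :: "int \<Rightarrow> rat \<Rightarrow> bool" where "II t k \<equiv> of_int t * k \<in> (\<int>::rat set)"

lemma of_rat_Ints_iff: "(of_rat q :: real) \<in> \<int> \<longleftrightarrow> q \<in> \<int>"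
proof
  assume "of_rat q \<in> (\<int>::real set)"
  then obtain n where "(of_rat q::real) = of_int n" by (auto elim: Ints_cases)
  then have "(of_rat q::real) = of_rat (of_int n)" by simp
  then have "q = of_int n" using of_rat_eq_iff by blast
  then show "q \<in> \<int>" by simp
next
  assume "q \<in> \<int>" then show "(of_rat q::real) \<in> \<int>" by (auto elim!: Ints_cases)
qed

lemma cis_eq_iff_Ints: "cis u = cis v \<longleftrightarrow> (u - v) / (2 * pi) \<in> \<int>"
proof -
  have "cis u = cis v \<longleftrightarrow> sin u = sin v \<and> cos u = cos v"
    by (auto simp: complex_eq_iff)
  also have "\<dots> \<longleftrightarrow> (\<exists>n::int. u = v + 2 * pi * n)" by (rule sin_cos_eq_iff)
  also have "\<dots> \<longleftrightarrow> (\<exists>n::int. (u - v) / (2 * pi) = n)"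
  proof -
    have "u = v + 2 * pi * n \<longleftrightarrow> (u - v) / (2 * pi) = n" for n :: int
      by (auto simp: field_simps)
    then show ?thesis by simp
  qed
  also have "\<dots> \<longleftrightarrow> (u - v) / (2 * pi) \<in> \<int>" by (auto simp: Ints_def)
  finally show ?thesis .
qed

lemma cis_rot_eq:
  "cis (- 2 * pi * real_of_int a * real_of_rat k) = cis (- 2 * pi * real_of_int b * real_of_rat k)
   \<longleftrightarrow> II (a - b) k"
proof -
  have "(- 2 * pi * real_of_int a * real_of_rat k - - 2 * pi * real_of_int b * real_of_rat k) / (2 * pi)
        = - of_rat (of_int (a - b) * k)"
    by (simp add: field_simps of_rat_mult of_rat_diff)
  then show ?thesis
    by (simp only: cis_eq_iff_Ints minus_in_Ints_iff of_rat_Ints_iff)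
qed

definition rot :: "int \<Rightarrow> expfac \<Rightarrow> expfac" where
  "rot t x = (\<lambda>k. cis (- 2 * pi * real_of_int t * real_of_rat k) * x k)"

lemma rot_0[simp]: "rot 0 x = x"
  by (simp add: rot_def)

lemma rot_add: "rot s (rot t x) = rot (s + t) x"
proof (rule ext)
  fix k
  have "cis (- 2 * pi * real_of_int s * real_of_rat k) * cis (- 2 * pi * real_of_int t * real_of_rat k)
        = cis (- 2 * pi * real_of_int (s + t) * real_of_rat k)"
    by (simp add: cis_mult algebra_simps)
  then show "rot s (rot t x) k = rot (s + t) x k"
    by (simp add: rot_def mult.assoc[symmetric])
qed

lemma sigma_rot1: "sigma x = rot 1 x"
  by (simp add: sigma_def rot_def)

lemma sigma_pow_rot: "(sigma ^^ n) x = rot (int n) x"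
  by (induction n) (simp_all add: sigma_rot1 rot_add add.commute)

lemma rot_nz: "rot t x k \<noteq> 0 \<longleftrightarrow> x k \<noteq> 0"
  by (simp add: rot_def)

lemma expo_rot[simp]: "expo (rot t x) = expo x"
  by (simp add: expo_def rot_nz)

lemma rot_diff_nz: "(rot a x - rot b x) k \<noteq> 0 \<longleftrightarrow> x k \<noteq> 0 \<and> \<not> II (a - b) k"
proof -
  have e: "(rot a x - rot b x) k = (cis (- 2 * pi * real_of_int a * real_of_rat k) - cis (- 2 * pi * real_of_int b * real_of_rat k)) * x k"
    by (simp add: rot_def algebra_simps)
  show ?thesis unfolding e mult_eq_0_iff right_minus_eq cis_rot_eq by blast
qed

lemma rot_diff: "rot t (x - y) = rot t x - rot t y"
  by (rule ext) (simp add: rot_def algebra_simps)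

lemma finite_expo_diff: "finite (expo x) \<Longrightarrow> finite (expo y) \<Longrightarrow> finite (expo (x - y))"
  by (rule finite_subset[of _ "expo x \<union> expo y"]) (auto simp: expo_def)

lemma slope_ge: "finite (expo x) \<Longrightarrow> x k \<noteq> 0 \<Longrightarrow> k \<le> slope x"
  by (auto simp: slope_def expo_def)

lemma slope_in: "finite (expo x) \<Longrightarrow> x \<noteq> 0 \<Longrightarrow> x (slope x) \<noteq> 0"
proof -
  assume f: "finite (expo x)" and nz: "x \<noteq> 0"
  then have ne: "expo x \<noteq> {}" by (auto simp: expo_def)
  then have "Max (expo x) \<in> expo x" using f by (rule Max_in[rotated])
  then show ?thesis using ne by (simp add: slope_def expo_def)
qed

lemma slope_eqI: "finite (expo x) \<Longrightarrow> x s \<noteq> 0 \<Longrightarrow> (\<forall>k>s. x k = 0) \<Longrightarrow> slope x = s"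
proof -
  assume f: "finite (expo x)" and s: "x s \<noteq> 0" and a: "\<forall>k>s. x k = 0"
  have ne: "expo x \<noteq> {}" using s by (auto simp: expo_def)
  have "Max (expo x) = s"
    using f s a by (intro Max_eqI) (auto simp: expo_def not_less[symmetric])
  then show ?thesis using ne by (simp add: slope_def)
qed

lemma slope_zero[simp]: "slope 0 = 0"
  by (simp add: slope_def expo_def)

lemma rat_den_ex: "\<exists>d::nat. d \<ge> 1 \<and> k * of_nat d \<in> (\<int>::rat set)"
proof -
  obtain a b where q: "quotient_of k = (a, b)" by (cases "quotient_of k")
  have b: "b > 0" using quotient_of_denom_pos[OF q] .
  have "k = of_int a / of_int b" using quotient_of_div[OF q] .
  then have "k * of_nat (nat b) = of_int a" using b by simp
  then show ?thesis using b by (intro exI[of _ "nat b"]) auto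
qed

lemma ram_ex: "finite (expo x) \<Longrightarrow> \<exists>r::nat. r \<ge> 1 \<and> (\<forall>k\<in>expo x. k * of_nat r \<in> \<int>)"
proof -
  assume f: "finite (expo x)"
  define den where "den k = (SOME d::nat. d \<ge> 1 \<and> k * of_nat d \<in> (\<int>::rat set))" for k
  have den: "den k \<ge> 1 \<and> k * of_nat (den k) \<in> (\<int>::rat set)" for k
    unfolding den_def by (rule someI_ex[OF rat_den_ex])
  define r where "r = (\<Prod>k\<in>expo x. den k)"
  have "r \<ge> 1" unfolding r_def using den by (simp add: Suc_le_eq prod_pos)
  moreover have "k * of_nat r \<in> \<int>" if "k \<in> expo x" for k
  proof -
    have "r = den k * (\<Prod>k\<in>expo x - {k}. den k)"
      unfolding r_def using f that by (simp add: prod.remove)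
    then have "k * of_nat r = (k * of_nat (den k)) * of_nat (\<Prod>k\<in>expo x - {k}. den k)"
      by (simp only: of_nat_mult mult.assoc)
    then show ?thesis using den[of k] by (metis Ints_mult Ints_of_nat)
  qed
  ultimately show ?thesis by blast
qed

lemma ram_props: "finite (expo x) \<Longrightarrow> ram x \<ge> 1 \<and> (\<forall>k\<in>expo x. k * of_nat (ram x) \<in> \<int>)"
  unfolding ram_def by (rule LeastI_ex) (rule ram_ex)

lemma ram_dvd_iff: "finite (expo x) \<Longrightarrow> int (ram x) dvd t \<longleftrightarrow> (\<forall>k\<in>expo x. II t k)"
proof
  assume f: "finite (expo x)" and d: "int (ram x) dvd t"
  then obtain z where t: "t = int (ram x) * z" by (auto elim: dvdE)
  show "\<forall>k\<in>expo x. II t k"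
  proof
    fix k assume "k \<in> expo x"
    then have "k * of_nat (ram x) \<in> \<int>" using ram_props[OF f] by blast
    then have "of_int z * (k * of_nat (ram x)) \<in> (\<int>::rat set)" by (simp add: Ints_mult)
    then show "II t k" by (simp add: t algebra_simps)
  qed
next
  assume f: "finite (expo x)" and a: "\<forall>k\<in>expo x. II t k"
  define R where "R = ram x"
  have R: "R \<ge> 1" "\<forall>k\<in>expo x. k * of_nat R \<in> \<int>" using ram_props[OF f] by (auto simp: R_def)
  define r0 where "r0 = t mod int R"
  have r0: "0 \<le> r0" "r0 < int R" using R(1) by (auto simp: r0_def)
  have tdec: "t = int R * (t div int R) + r0" by (simp add: r0_def)
  have II0: "II r0 k" if "k \<in> expo x" for k
  proof -
    have "of_int r0 * k = of_int t * k - of_int (t div int R) * (k * of_nat R)"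
      by (subst tdec) (simp add: algebra_simps)
    then show ?thesis using a that R(2) by (simp add: Ints_diff Ints_mult)
  qed
  have "r0 = 0"
  proof (rule ccontr)
    assume "r0 \<noteq> 0"
    then have "nat r0 \<ge> 1" using r0 by simp
    moreover have "\<forall>k\<in>expo x. k * of_nat (nat r0) \<in> \<int>"
      using II0 r0 by (simp add: mult.commute)
    ultimately have "R \<le> nat r0" unfolding R_def ram_def by (intro Least_le) simp
    then show False using r0 by simp
  qed
  then show "int (ram x) dvd t" by (simp add: r0_def R_def dvd_eq_mod_eq_0)
qed

lemma fin_expo: "is_expfac x \<Longrightarrow> finite (expo x)"
  by (simp add: is_expfac_def expo_def)

lemma pos_expo: "is_expfac x \<Longrightarrow> x k \<noteq> 0 \<Longrightarrow> k > 0"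
  by (simp add: is_expfac_def)

lemma rot_mod: "finite (expo x) \<Longrightarrow> rot t x = rot (t mod int (ram x)) x"
proof (rule ext)
  fix k assume f: "finite (expo x)"
  have "int (ram x) dvd (t - t mod int (ram x))" by (simp add: minus_mod_eq_mult_div)
  then have a: "\<forall>k\<in>expo x. II (t - t mod int (ram x)) k" using ram_dvd_iff[OF f] by blast
  show "rot t x k = rot (t mod int (ram x)) x k"
  proof (cases "x k = 0")
    case True then show ?thesis by (simp add: rot_def)
  next
    case False
    then have "II (t - t mod int (ram x)) k" using a by (simp add: expo_def)
    then have "cis (- 2 * pi * real_of_int t * real_of_rat k) = cis (- 2 * pi * real_of_int (t mod int (ram x)) * real_of_rat k)"
      using cis_rot_eq by blast
    then show ?thesis by (simp add: rot_def)
  qed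
qed

lemma rot_as_nat: "finite (expo x) \<Longrightarrow> \<exists>n::nat. rot t x = rot (int n) x"
proof -
  assume f: "finite (expo x)"
  have "ram x \<ge> 1" using ram_props[OF f] by blast
  then have "t mod int (ram x) \<ge> 0" by simp
  then show ?thesis using rot_mod[OF f, where t=t] by (intro exI[of _ "nat (t mod int (ram x))"]) simp
qed

lemma stokes_int: "finite (expo x) \<Longrightarrow> stokes x = range (\<lambda>t::int. rot t x)"
proof -
  assume f: "finite (expo x)"
  have "stokes x = range (\<lambda>i::nat. rot (int i) x)" by (simp add: stokes_def sigma_pow_rot)
  also have "\<dots> = range (\<lambda>t::int. rot t x)"
  proof
    show "range (\<lambda>i::nat. rot (int i) x) \<subseteq> range (\<lambda>t::int. rot t x)" by auto
    show "range (\<lambda>t::int. rot t x) \<subseteq> range (\<lambda>i::nat. rot (int i) x)"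
      using rot_as_nat[OF f] by blast
  qed
  finally show ?thesis .
qed

lemma range_shift_int: "range (\<lambda>t::int. g (t + c)) = range g"
proof
  show "range (\<lambda>t::int. g (t + c)) \<subseteq> range g" by auto
  show "range g \<subseteq> range (\<lambda>t::int. g (t + c))"
  proof
    fix y assume "y \<in> range g"
    then obtain t where "y = g t" by auto
    then have "y = g ((t - c) + c)" by simp
    then show "y \<in> range (\<lambda>t::int. g (t + c))" by blast
  qed
qed

lemma stokes_eq: "finite (expo x) \<Longrightarrow> finite (expo y) \<Longrightarrow> rot a x = rot b y \<Longrightarrow> stokes x = stokes y"
proof -
  assume fx: "finite (expo x)" and fy: "finite (expo y)" and e: "rot a x = rot b y"
  have "y = rot (- b) (rot b y)" by (simp add: rot_add)
  also have "\<dots> = rot (a - b) x" using e[symmetric] by (simp add: rot_add)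
  finally have y: "y = rot (a - b) x" .
  have "stokes y = range (\<lambda>t::int. rot t (rot (a - b) x))" using stokes_int[OF fy] y by simp
  also have "\<dots> = range (\<lambda>t::int. rot (t + (a - b)) x)" by (simp add: rot_add)
  also have "\<dots> = range (\<lambda>t::int. rot t x)" by (rule range_shift_int)
  finally show ?thesis using stokes_int[OF fx] by simp
qed

definition GE :: "expfac \<Rightarrow> rat \<Rightarrow> int \<Rightarrow> rat" where
  "GE q f t = (if {k\<in>expo q. f < k \<and> \<not> II t k} = {} then f else Max {k\<in>expo q. f < k \<and> \<not> II t k})"

definition GL :: "rat set \<Rightarrow> rat \<Rightarrow> int \<Rightarrow> rat" where
  "GL L f t = (if {k\<in>L. f < k \<and> \<not> II t k} = {} then f else Max {k\<in>L. f < k \<and> \<not> II t k})"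

lemma slope_by_set:
  assumes "finite (expo D)" "finite N" "N \<noteq> {}" "\<forall>k\<in>N. f < k" "\<forall>k>f. D k \<noteq> 0 \<longleftrightarrow> k \<in> N"
  shows "slope D = Max N"
proof (rule slope_eqI[OF assms(1)])
  have m: "Max N \<in> N" using assms(2,3) by simp
  then show "D (Max N) \<noteq> 0" using assms(4,5) by blast
  show "\<forall>k>Max N. D k = 0"
  proof (intro allI impI)
    fix k assume k: "Max N < k"
    then have "f < k" using m assms(4) by force
    show "D k = 0"
    proof (rule ccontr)
      assume "D k \<noteq> 0"
      then have "k \<in> N" using assms(5) \<open>f < k\<close> by blast
      then have "k \<le> Max N" using assms(2) by simp
      then show False using k by simp
    qed
  qed
qed

lemma h_formula:
  assumes q: "is_expfac q"
  shows "slope (q - rot t q) = GE q 0 t"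
proof -
  let ?D = "rot 0 q - rot t q"
  let ?N = "{k\<in>expo q. 0 < k \<and> \<not> II t k}"
  have Dk: "?D k \<noteq> 0 \<longleftrightarrow> k \<in> ?N" for k
    using rot_diff_nz[of 0 q t k] pos_expo[OF q, of k] by (auto simp: expo_def)
  have fin: "finite (expo ?D)" using fin_expo[OF q] by (simp add: finite_expo_diff)
  have finN: "finite ?N" using fin_expo[OF q] by simp
  show ?thesis
  proof (cases "?N = {}")
    case True
    then have "?D = 0" using Dk by auto
    then show ?thesis using True by (simp add: GE_def)
  next
    case False
    have "slope ?D = Max ?N" by (rule slope_by_set[OF fin finN False]) (use Dk in auto)
    moreover have "GE q 0 t = Max ?N" unfolding GE_def by (rule if_not_P[OF False])
    ultimately show ?thesis by simp
  qed
qed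

lemma levels_alt: "is_expfac q \<Longrightarrow> levels q = {slope (q - rot t q) | t. True} - {0}"
proof -
  assume q: "is_expfac q"
  have "{slope (q - (sigma ^^ i) q) | i::nat. True} = {slope (q - rot t q) | t. True}"
  proof
    show "{slope (q - (sigma ^^ i) q) | i::nat. True} \<subseteq> {slope (q - rot t q) | t. True}"
      by (auto simp: sigma_pow_rot)
    show "{slope (q - rot t q) | t. True} \<subseteq> {slope (q - (sigma ^^ i) q) | i::nat. True}"
    proof
      fix y assume "y \<in> {slope (q - rot t q) | t. True}"
      then obtain t where y: "y = slope (q - rot t q)" by blast
      obtain n where "rot t q = rot (int n) q" using rot_as_nat[OF fin_expo[OF q]] by blast
      then have "y = slope (q - (sigma ^^ n) q)" using y by (simp add: sigma_pow_rot)
      then show "y \<in> {slope (q - (sigma ^^ i) q) | i::nat. True}" by blast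
    qed
  qed
  then show ?thesis by (simp add: levels_def)
qed

lemma levels_sub: "is_expfac q \<Longrightarrow> levels q \<subseteq> expo q"
proof
  fix l assume q: "is_expfac q" and "l \<in> levels q"
  then obtain t where l: "l = slope (q - rot t q)" "l \<noteq> 0" using levels_alt[OF q] by auto
  let ?N = "{k\<in>expo q. 0 < k \<and> \<not> II t k}"
  have "l = GE q 0 t" using l h_formula[OF q] by simp
  then have "?N \<noteq> {}" "l = Max ?N" using l(2) by (auto simp: GE_def split: if_splits)
  moreover have "finite ?N" using fin_expo[OF q] by simp
  ultimately have "l \<in> ?N" using Max_in by metis
  then show "l \<in> expo q" by simp
qed

lemma GE_GL:
  assumes q: "is_expfac q" and f: "f \<ge> 0"
  shows "({k\<in>expo q. f < k \<and> \<not> II t k} = {} \<longleftrightarrow> {k\<in>levels q. f < k \<and> \<not> II t k} = {})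
         \<and> GE q f t = GL (levels q) f t"
proof -
  let ?N = "{k\<in>expo q. f < k \<and> \<not> II t k}" and ?NL = "{k\<in>levels q. f < k \<and> \<not> II t k}"
  let ?M = "{k\<in>expo q. 0 < k \<and> \<not> II t k}"
  have fin: "finite (expo q)" by (rule fin_expo[OF q])
  have sub: "?NL \<subseteq> ?N" using levels_sub[OF q] by auto
  have finN: "finite ?N" "finite ?M" using fin by simp_all
  have finNL: "finite ?NL" using finN(1) sub by (rule finite_subset[rotated])
  show ?thesis
  proof (cases "?N = {}")
    case True
    then have "?NL = {}" using sub by blast
    then show ?thesis using True by (simp add: GE_def GL_def)
  next
    case False
    have NM: "?N \<subseteq> ?M" using f by auto
    then have Mne: "?M \<noteq> {}" using False by blast
    let ?m = "Max ?M"
    have "Max ?N \<le> ?m" by (rule Max_mono[OF NM False finN(2)])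
    moreover have "Max ?N \<in> ?N" using False finN(1) by (intro Max_in) auto
    then have "f < Max ?N" by simp
    ultimately have fm: "f < ?m" by simp
    have mM: "?m \<in> ?M" using Max_in[OF finN(2) Mne] .
    have "GE q 0 t = ?m" unfolding GE_def by (rule if_not_P[OF Mne])
    then have "slope (q - rot t q) = ?m" using h_formula[OF q, of t] by simp
    moreover have "?m \<noteq> 0" using fm f by simp
    ultimately have "?m \<in> {slope (q - rot t q) | t. True} - {0}"
      by (metis (mono_tags, lifting) DiffI mem_Collect_eq singletonD)
    then have "?m \<in> levels q" using levels_alt[OF q] by simp
    then have mNL: "?m \<in> ?NL" using mM fm by simp
    then have "?m \<le> Max ?NL" using finNL by simp
    moreover have "Max ?NL \<le> Max ?N" using mNL by (intro Max_mono[OF sub _ finN(1)]) auto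
    ultimately have "Max ?N = Max ?NL" using \<open>Max ?N \<le> ?m\<close> by simp
    moreover have NLne: "?NL \<noteq> {}" using mNL by blast
    moreover have "GE q f t = Max ?N" unfolding GE_def by (rule if_not_P[OF False])
    moreover have "GL (levels q) f t = Max ?NL" unfolding GL_def by (rule if_not_P[OF NLne])
    ultimately have "GE q f t = GL (levels q) f t" by simp
    then show ?thesis using False NLne by blast
  qed
qed

lemma slope_rot[simp]: "slope (rot t x) = slope x"
  by (simp add: slope_def)

lemma II_neg: "II (- t) k \<longleftrightarrow> II t k"
proof -
  have "of_int (- t) * k = - (of_int t * k)" by simp
  then show ?thesis by (simp only: minus_in_Ints_iff)
qed

lemma GE_neg: "GE q f (- t) = GE q f t"
  unfolding GE_def II_neg ..

lemma slope_same:
  assumes q: "is_expfac q"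
  shows "slope (rot a q - rot b q) = GE q 0 (a - b)"
proof -
  have "rot a q - rot b q = rot a (q - rot (b - a) q)" by (simp add: rot_diff rot_add)
  then have "slope (rot a q - rot b q) = GE q 0 (b - a)" using h_formula[OF q] by simp
  also have "\<dots> = GE q 0 (- (a - b))" by simp
  finally show ?thesis by (simp only: GE_neg)
qed

lemma slope_pos:
  assumes "finite (expo x)" "\<forall>k. x k \<noteq> 0 \<longrightarrow> k > 0" "x \<noteq> 0"
  shows "slope x > 0 \<and> x (slope x) \<noteq> 0"
  using slope_in[OF assms(1,3)] assms(2) by blast

lemma expo_trunc_sub: "expo (trunc k q) \<subseteq> expo q"
  by (auto simp: expo_def trunc_def)

lemma rot_trunc: "rot a (trunc f q) k = (if f \<le> k then rot a q k else 0)"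
  by (simp add: rot_def trunc_def)

lemma pos_diff: fixes x y :: expfac shows "\<forall>k. x k \<noteq> 0 \<longrightarrow> k > (0::rat) \<Longrightarrow> \<forall>k. y k \<noteq> 0 \<longrightarrow> k > 0 \<Longrightarrow> \<forall>k. (x - y) k \<noteq> 0 \<longrightarrow> k > 0"
proof (intro allI impI)
  fix k assume a: "\<forall>k. x k \<noteq> 0 \<longrightarrow> k > (0::rat)" "\<forall>k. y k \<noteq> 0 \<longrightarrow> k > 0" and "(x - y) k \<noteq> 0"
  then have d: "x k - y k \<noteq> 0" by simp
  show "k > 0"
  proof (rule ccontr)
    assume "\<not> k > 0"
    then have "x k = 0" "y k = 0" using a by auto
    then show False using d by simp
  qed
qed

lemma CP:
  assumes q: "is_expfac q" and p: "is_expfac p" and ne: "stokes q \<noteq> stokes p"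
    and comp: "\<forall>k. stokes (trunc k q) = stokes (trunc k p) \<longrightarrow> trunc k q = trunc k p"
  defines "c \<equiv> fst (common_part q p)" and "f \<equiv> fission_exp q p"
  shows "snd (common_part q p) = c \<and> finite (expo c) \<and> (\<forall>k. c k \<noteq> 0 \<longrightarrow> k > f)
     \<and> (\<forall>k>f. q k = c k \<and> p k = c k)
     \<and> (q f \<noteq> 0 \<longrightarrow> stokes (trunc f q) \<noteq> stokes (trunc f p))
     \<and> f = max (slope (q - c)) (slope (p - c)) \<and> f \<ge> 0"
proof -
  define S where "S = {k \<in> expo q. stokes (trunc k q) = stokes (trunc k p)}"
  have cp: "common_part q p = (if S = {} then (0, 0) else (trunc (Min S) q, trunc (Min S) p))"
    unfolding common_part_def Let_def S_def by (rule refl)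
  have fq: "finite (expo q)" and fp: "finite (expo p)" using fin_expo q p by auto
  have finS: "finite S" using fq by (simp add: S_def)
  show ?thesis
  proof (cases "S = {}")
    case True
    then have c0: "c = 0" and snd0: "snd (common_part q p) = 0" using cp by (simp_all add: c_def)
    have f: "f = max (slope q) (slope p)" using cp True by (simp add: f_def fission_exp_def)
    have fnn: "f \<ge> 0"
    proof (cases "q = 0")
      case True then show ?thesis using f by simp
    next
      case False
      then have "slope q > 0" using slope_pos[OF fq] pos_expo[OF q] by blast
      then show ?thesis using f by simp
    qed
    have above: "\<forall>k>f. q k = c k \<and> p k = c k"
    proof (intro allI impI)
      fix k assume k: "f < k"
      have "q k = 0" using slope_ge[OF fq, of k] k f by fastforce
      moreover have "p k = 0" using slope_ge[OF fp, of k] k f by fastforce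
      ultimately show "q k = c k \<and> p k = c k" by (simp add: c0)
    qed
    have P3: "q f \<noteq> 0 \<longrightarrow> stokes (trunc f q) \<noteq> stokes (trunc f p)"
      using True by (auto simp: S_def expo_def)
    show ?thesis using c0 snd0 fnn above P3 f by (simp add: expo_def)
  next
    case False
    define \<kappa> where "\<kappa> = Min S"
    have kS: "\<kappa> \<in> S" using finS False by (simp add: \<kappa>_def)
    then have kpos: "\<kappa> > 0" using pos_expo[OF q] by (simp add: S_def expo_def)
    have ceq: "trunc \<kappa> q = trunc \<kappa> p" using comp kS by (simp add: S_def)
    have c: "c = trunc \<kappa> q" and snd: "snd (common_part q p) = c"
      using cp False ceq by (simp_all add: c_def \<kappa>_def)
    have f: "f = max (slope (q - c)) (slope (p - c))"
      using cp False ceq by (simp add: f_def fission_exp_def c_def \<kappa>_def)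
    have fc: "finite (expo c)" using fq expo_trunc_sub[of \<kappa> q] c finite_subset by metis
    have low: "slope (x - trunc \<kappa> x) < \<kappa>" if "is_expfac x" for x
    proof (cases "x - trunc \<kappa> x = 0")
      case True then show ?thesis using kpos by simp
    next
      case False
      have "finite (expo (x - trunc \<kappa> x))"
        using fin_expo[OF that] expo_trunc_sub finite_subset finite_expo_diff by metis
      then have "(x - trunc \<kappa> x) (slope (x - trunc \<kappa> x)) \<noteq> 0" using slope_in False by blast
      then show ?thesis by (auto simp: trunc_def split: if_splits)
    qed
    have fk: "f < \<kappa>" using low[OF q] low[OF p] f c ceq by simp
    have fqc: "finite (expo (q - c))" "finite (expo (p - c))" using fq fp fc finite_expo_diff by auto
    have fnn: "f \<ge> 0"
    proof (cases "q - c = 0")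
      case True
      then have "q = c" by simp
      show ?thesis
      proof (cases "p - c = 0")
        case True then have "p = c" by simp
        then show ?thesis using \<open>q = c\<close> ne by simp
      next
        case False
        have "\<forall>k. (p - c) k \<noteq> 0 \<longrightarrow> k > 0"
          using pos_diff[of p c] pos_expo[OF p] pos_expo[OF q] \<open>q = c\<close> by blast
        then have "slope (p - c) > 0" using slope_pos[OF fqc(2)] False by blast
        then show ?thesis using f by simp
      qed
    next
      case False
      have "\<forall>k. (q - c) k \<noteq> 0 \<longrightarrow> k > 0"
        using pos_expo[OF q] c kpos by (auto simp: trunc_def split: if_splits)
      then have "slope (q - c) > 0" using slope_pos[OF fqc(1)] False by blast
      then show ?thesis using f by simp
    qed
    have cnz: "\<forall>k. c k \<noteq> 0 \<longrightarrow> k > f" using fk c by (auto simp: trunc_def split: if_splits)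
    have above: "\<forall>k>f. q k = c k \<and> p k = c k"
    proof (intro allI impI)
      fix k assume k: "f < k"
      have "(q - c) k = 0" using slope_ge[OF fqc(1), of k] k f by fastforce
      moreover have "(p - c) k = 0" using slope_ge[OF fqc(2), of k] k f by fastforce
      ultimately show "q k = c k \<and> p k = c k" by simp
    qed
    have P3: "q f \<noteq> 0 \<longrightarrow> stokes (trunc f q) \<noteq> stokes (trunc f p)"
    proof
      assume "q f \<noteq> 0"
      show "stokes (trunc f q) \<noteq> stokes (trunc f p)"
      proof
        assume "stokes (trunc f q) = stokes (trunc f p)"
        then have "f \<in> S" using \<open>q f \<noteq> 0\<close> by (simp add: S_def expo_def)
        then have "\<kappa> \<le> f" using finS by (simp add: \<kappa>_def)
        then show False using fk by simp
      qed
    qed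
    show ?thesis using snd fc cnz above P3 f fnn by blast
  qed
qed

lemma KL:
  assumes q: "is_expfac q" and p: "is_expfac p" and fc: "finite (expo c)"
    and cnz: "\<forall>k. c k \<noteq> 0 \<longrightarrow> k > f" and above: "\<forall>k>f. q k = c k \<and> p k = c k"
    and P3: "q f \<noteq> 0 \<longrightarrow> stokes (trunc f q) \<noteq> stokes (trunc f p)"
    and f: "f = max (slope (q - c)) (slope (p - c))" and fnn: "f \<ge> 0" and qp: "q \<noteq> p"
  shows "slope (rot a q - rot b p) = GE q f (a - b)"
proof -
  let ?D = "rot a q - rot b p"
  let ?N = "{k\<in>expo q. f < k \<and> \<not> II (a - b) k}"
  have fq: "finite (expo q)" and fp: "finite (expo p)" using fin_expo q p by auto
  have fD: "finite (expo ?D)" using fq fp by (simp add: finite_expo_diff)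
  have finN: "finite ?N" using fq by simp
  have Dk: "?D k \<noteq> 0 \<longleftrightarrow> k \<in> ?N" if k: "f < k" for k
  proof -
    have "p k = q k" using above k by simp
    then have "?D k = (rot a q - rot b q) k" by (simp add: rot_def)
    then show ?thesis using rot_diff_nz[of a q b k] k by (simp add: expo_def)
  qed
  show ?thesis
  proof (cases "?N = {}")
    case False
    have "slope ?D = Max ?N" by (rule slope_by_set[OF fD finN False]) (use Dk in auto)
    moreover have "GE q f (a - b) = Max ?N" unfolding GE_def by (rule if_not_P[OF False])
    ultimately show ?thesis by simp
  next
    case True
    have GEf: "GE q f (a - b) = f" unfolding GE_def by (rule if_P[OF True])
    have zero_above: "\<forall>k>f. ?D k = 0" using Dk True by blast
    have "?D f \<noteq> 0"
    proof
      assume Df: "?D f = 0"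
      have "rot a (trunc f q) = rot b (trunc f p)"
      proof (rule ext)
        fix k
        show "rot a (trunc f q) k = rot b (trunc f p) k"
        proof (cases "f \<le> k")
          case True
          then have "?D k = 0" using Df zero_above by (cases "k = f") auto
          then show ?thesis using True by (simp add: rot_trunc)
        next
          case False then show ?thesis by (simp add: rot_trunc)
        qed
      qed
      then have "stokes (trunc f q) = stokes (trunc f p)"
        using stokes_eq fq fp expo_trunc_sub finite_subset by metis
      then have qf: "q f = 0" using P3 by blast
      then have "rot b p f = 0" using Df by (simp add: rot_def)
      then have pf: "p f = 0" using rot_nz by metis
      have cf: "c f = 0" using cnz by force
      have fqc: "finite (expo (q - c))" "finite (expo (p - c))" using fq fp fc finite_expo_diff by auto
      have posc: "\<forall>k. c k \<noteq> 0 \<longrightarrow> k > 0"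
      proof (intro allI impI)
        fix k assume "c k \<noteq> 0" then have "f < k" using cnz by blast
        then show "k > 0" using fnn by simp
      qed
      have posq: "\<forall>k. (q - c) k \<noteq> 0 \<longrightarrow> k > 0"
        using pos_diff[of q c] pos_expo[OF q] posc by blast
      have posp: "\<forall>k. (p - c) k \<noteq> 0 \<longrightarrow> k > 0"
        using pos_diff[of p c] pos_expo[OF p] posc by blast
      have qcf: "(q - c) f = 0" "(p - c) f = 0" using qf pf cf by simp_all
      have "q - c = 0"
      proof (rule ccontr)
        assume nz: "q - c \<noteq> 0"
        have "slope (q - c) > 0 \<and> (q - c) (slope (q - c)) \<noteq> 0"
          by (rule slope_pos[OF fqc(1) posq nz])
        then have "slope (q - c) > 0" "(q - c) (slope (q - c)) \<noteq> 0" by blast+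
        then have "slope (q - c) \<noteq> f" using qcf by auto
        then have sp: "slope (p - c) = f" "slope (q - c) < f" using f by (auto simp: max_def split: if_splits)
        then have "p - c \<noteq> 0" using \<open>slope (q - c) > 0\<close> by auto
        then have "(p - c) (slope (p - c)) \<noteq> 0" using slope_pos[OF fqc(2) posp] by blast
        then show False using sp qcf by simp
      qed
      moreover have "p - c = 0"
      proof (rule ccontr)
        assume nz: "p - c \<noteq> 0"
        have "slope (p - c) > 0 \<and> (p - c) (slope (p - c)) \<noteq> 0"
          by (rule slope_pos[OF fqc(2) posp nz])
        then have "slope (p - c) > 0" "(p - c) (slope (p - c)) \<noteq> 0" by blast+
        then have "slope (p - c) \<noteq> f" using qcf by auto
        then have sp: "slope (q - c) = f" "slope (p - c) < f" using f by (auto simp: max_def split: if_splits)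
        then have "q - c \<noteq> 0" using \<open>slope (p - c) > 0\<close> by auto
        then have "(q - c) (slope (q - c)) \<noteq> 0" using slope_pos[OF fqc(1) posq] by blast
        then show False using sp qcf by simp
      qed
      ultimately show False using qp by simp
    qed
    then have "slope ?D = f" using slope_eqI[OF fD] zero_above by blast
    then show ?thesis using GEf by simp
  qed
qed

lemma pair_formula:
  assumes q: "is_expfac q" and p: "is_expfac p" and ne: "stokes q \<noteq> stokes p"
    and comp: "\<forall>k. stokes (trunc k q) = stokes (trunc k p) \<longrightarrow> trunc k q = trunc k p"
  shows "slope (rot a q - rot b p) = GL (levels q) (fission_exp q p) (a - b)"
proof -
  note cp = CP[OF q p ne comp]
  have qp: "q \<noteq> p" using ne by blast
  have "slope (rot a q - rot b p) = GE q (fission_exp q p) (a - b)"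
    by (rule KL[OF q p]) (use cp qp in blast)+
  also have "\<dots> = GL (levels q) (fission_exp q p) (a - b)"
    using GE_GL[OF q] cp by blast
  finally show ?thesis .
qed

lemma pair_dvd:
  assumes q: "is_expfac q" and p: "is_expfac p" and ne: "stokes q \<noteq> stokes p"
    and comp: "\<forall>k. stokes (trunc k q) = stokes (trunc k p) \<longrightarrow> trunc k q = trunc k p"
  shows "int (ram (fst (common_part q p))) dvd t \<longleftrightarrow>
         {k\<in>levels q. fission_exp q p < k \<and> \<not> II t k} = {}"
proof -
  note cp = CP[OF q p ne comp]
  define c where "c = fst (common_part q p)"
  define f where "f = fission_exp q p"
  have fc: "finite (expo c)" and cnz: "\<forall>k. c k \<noteq> 0 \<longrightarrow> k > f"
    and above: "\<forall>k>f. q k = c k \<and> p k = c k" and fnn: "f \<ge> 0"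
    unfolding c_def f_def using cp by blast+
  have ec: "expo c = {k\<in>expo q. f < k}"
  proof
    show "expo c \<subseteq> {k\<in>expo q. f < k}" using cnz above by (auto simp: expo_def)
    show "{k\<in>expo q. f < k} \<subseteq> expo c" using above by (auto simp: expo_def)
  qed
  have "int (ram c) dvd t \<longleftrightarrow> (\<forall>k\<in>expo c. II t k)" by (rule ram_dvd_iff[OF fc])
  also have "\<dots> \<longleftrightarrow> {k\<in>expo q. f < k \<and> \<not> II t k} = {}" using ec by auto
  also have "\<dots> \<longleftrightarrow> {k\<in>levels q. f < k \<and> \<not> II t k} = {}" using GE_GL[OF q fnn] by blast
  finally show ?thesis by (simp add: c_def f_def)
qed

lemma same_formula:
  assumes q: "is_expfac q"
  shows "slope (rot a q - rot b q) = GL (levels q) 0 (a - b)"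
  using slope_same[OF q] GE_GL[OF q, of 0] by simp

lemma GL_shift:
  assumes "\<forall>l\<in>L. f < l \<longrightarrow> II \<delta> l"
  shows "GL L f (t + \<delta>) = GL L f t"
proof -
  have "II (t + \<delta>) l \<longleftrightarrow> II t l" if "l \<in> L" "f < l" for l
  proof -
    have d: "II \<delta> l" using assms that by blast
    have e: "of_int (t + \<delta>) * l = of_int t * l + of_int \<delta> * l" by (simp add: algebra_simps)
    show ?thesis
    proof
      assume "II (t + \<delta>) l"
      then have "of_int (t + \<delta>) * l - of_int \<delta> * l \<in> (\<int>::rat set)" using d by (rule Ints_diff)
      then show "II t l" using e by simp
    next
      assume "II t l"
      then show "II (t + \<delta>) l" using d e by (simp add: Ints_add)
    qed
  qed
  then have "{k\<in>L. f < k \<and> \<not> II (t + \<delta>) k} = {k\<in>L. f < k \<and> \<not> II t k}" by blast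
  then show ?thesis by (simp only: GL_def)
qed

lemma GL_zero: "GL L f 0 = f"
  by (simp add: GL_def)

lemma GL_eq_f:
  assumes "finite L" "GL L f t = f"
  shows "{k\<in>L. f < k \<and> \<not> II t k} = {}"
proof (rule ccontr)
  let ?N = "{k\<in>L. f < k \<and> \<not> II t k}"
  assume ne: "?N \<noteq> {}"
  have "finite ?N" using assms(1) by simp
  then have "Max ?N \<in> ?N" using ne by (rule Max_in)
  moreover have "GL L f t = Max ?N" unfolding GL_def by (rule if_not_P[OF ne])
  ultimately show False using assms(2) by simp
qed

lemma finite_levels: "is_expfac q \<Longrightarrow> finite (levels q)"
  using levels_sub fin_expo finite_subset by metis

lemma sum_fun_app: "(\<Sum>j\<in>A. g j) k = (\<Sum>j\<in>A. g j k)"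
  by (induction A rule: infinite_finite_induct) auto

lemma REP:
  fixes F :: expfac and r :: nat and K :: rat
  assumes r: "r > 0" and F: "is_expfac F" and b: "\<forall>k\<in>expo F. of_nat r * k \<in> \<int> \<and> k \<le> K"
  shows "(\<Sum>j\<in>{1..nat \<lfloor>of_nat r * K\<rfloor>}. monom_ef (F (of_nat j / of_nat r)) (of_nat j / of_nat r)) = F"
proof (rule ext)
  fix k
  let ?A = "{1..nat \<lfloor>of_nat r * K\<rfloor>}"
  have "(\<Sum>j\<in>?A. monom_ef (F (of_nat j / of_nat r)) (of_nat j / of_nat r)) k
        = (\<Sum>j\<in>?A. if k = of_nat j / of_nat r then F (of_nat j / of_nat r) else 0)"
    by (simp add: sum_fun_app monom_ef_def)
  also have "\<dots> = F k"
  proof (cases "F k = 0")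
    case True
    have "\<forall>j\<in>?A. (if k = of_nat j / of_nat r then F (of_nat j / of_nat r) else 0) = 0"
      using True by auto
    then have "(\<Sum>j\<in>?A. if k = of_nat j / of_nat r then F (of_nat j / of_nat r) else 0) = 0"
      by (rule sum.neutral)
    then show ?thesis using True by simp
  next
    case False
    then have ke: "k \<in> expo F" by (simp add: expo_def)
    then obtain z where z: "of_nat r * k = of_int z" using b by (auto elim: Ints_cases)
    have kpos: "k > 0" using pos_expo[OF F False] .
    have "of_nat r * k > (0::rat)" using kpos r by simp
    then have "of_int z > (0::rat)" using z by simp
    then have zpos: "z > 0" by simp
    have "of_nat r * k \<le> of_nat r * K" using b ke r by (simp add: mult_left_mono)
    then have "z \<le> \<lfloor>of_nat r * K\<rfloor>" using z by (simp add: le_floor_iff)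
    then have j0A: "nat z \<in> ?A" using zpos by (simp add: nat_mono)
    have kj: "k = of_nat (nat z) / of_nat r" using z zpos r by (simp add: field_simps)
    have "(\<Sum>j\<in>?A. if k = of_nat j / of_nat r then F (of_nat j / of_nat r) else 0)
        = (\<Sum>j\<in>?A. if j = nat z then F k else 0)"
    proof (rule sum.cong[OF refl])
      fix j
      have "k = of_nat j / of_nat r \<longleftrightarrow> j = nat z" using r kj by (auto simp: field_simps)
      then show "(if k = of_nat j / of_nat r then F (of_nat j / of_nat r) else 0) = (if j = nat z then F k else 0)"
        by auto
    qed
    also have "\<dots> = F k" using j0A by simp
    finally show ?thesis .
  qed
  finally show "(\<Sum>j\<in>?A. monom_ef (F (of_nat j / of_nat r)) (of_nat j / of_nat r)) k = F k" .
qed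

theorem mainTheorem18:
  fixes Q :: pit and \<pi> d :: "nat \<Rightarrow> nat"
  assumes "compatible Q"
    and "(\<pi>, d) \<in> GQ Q"
  shows "(\<exists>a\<in>BQ Q. act (\<pi>, d) Q = Q_a Q a) \<longleftrightarrow>
         (\<pi>, d) \<in> WQ Q"
proof -
  define m where "m = length Q"
  define qs where "qs i = snd (Q ! i)" for i
  have exq: "\<And>i. i < m \<Longrightarrow> is_expfac (qs i)"
    using assms(1) by (auto simp: compatible_def pointed_irr_type_def m_def qs_def)
  have dist: "\<And>i j. i < m \<Longrightarrow> j < m \<Longrightarrow> i \<noteq> j \<Longrightarrow> stokes (qs i) \<noteq> stokes (qs j)"
    using assms(1) by (auto simp: compatible_def pointed_irr_type_def m_def qs_def)
  have comp: "\<And>i j. i < m \<Longrightarrow> j < m \<Longrightarrow>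
     \<forall>k. stokes (trunc k (qs i)) = stokes (trunc k (qs j)) \<longrightarrow> trunc k (qs i) = trunc k (qs j)"
    using assms(1) by (auto simp: compatible_def m_def qs_def)
  have perm: "\<pi> permutes {..<m}"
    using assms(2) by (auto simp: GQ_def AutQ_def m_def)
  have autn: "\<And>i. i < m \<Longrightarrow> fst (Q ! \<pi> i) = fst (Q ! i)"
    using assms(2) by (auto simp: GQ_def AutQ_def m_def)
  have autl: "\<And>i. i < m \<Longrightarrow> levels (qs (\<pi> i)) = levels (qs i)"
    using assms(2) by (auto simp: GQ_def AutQ_def m_def qs_def)
  have autf: "\<And>i j. i < m \<Longrightarrow> j < m \<Longrightarrow> i \<noteq> j \<Longrightarrow>
      fission_exp (qs (\<pi> i)) (qs (\<pi> j)) = fission_exp (qs i) (qs j)"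
    using assms(2) by (auto simp: GQ_def AutQ_def m_def qs_def)
  have pim: "\<And>i. i < m \<Longrightarrow> \<pi> i < m" using permutes_in_image[OF perm] by simp
  have pinj: "\<And>i j. \<pi> i = \<pi> j \<Longrightarrow> i = j" using permutes_inj[OF perm] by (simp add: inj_eq)
  have psurj: "\<And>i. i < m \<Longrightarrow> \<exists>i0<m. \<pi> i0 = i"
  proof -
    fix i assume i: "i < m"
    have "inv \<pi> i < m" using permutes_in_image[OF permutes_inv[OF perm]] i by simp
    moreover have "\<pi> (inv \<pi> i) = i" using permutes_inverses(1)[OF perm] .
    ultimately show "\<exists>i0<m. \<pi> i0 = i" by blast
  qed
  have FORMd: "\<And>x y a b. x < m \<Longrightarrow> y < m \<Longrightarrow> x \<noteq> y \<Longrightarrow>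
      slope (rot a (qs x) - rot b (qs y)) = GL (levels (qs x)) (fission_exp (qs x) (qs y)) (a - b)"
    by (rule pair_formula[OF exq exq dist comp])
  have FORMs: "\<And>x a b. x < m \<Longrightarrow> slope (rot a (qs x) - rot b (qs x)) = GL (levels (qs x)) 0 (a - b)"
    by (rule same_formula[OF exq])
  have DVD: "\<And>x y t. x < m \<Longrightarrow> y < m \<Longrightarrow> x \<noteq> y \<Longrightarrow>
      int (rr Q x y) dvd t \<longleftrightarrow> {k\<in>levels (qs x). fission_exp (qs x) (qs y) < k \<and> \<not> II t k} = {}"
  proof -
    fix x y t assume xy: "x < m" "y < m" "x \<noteq> y"
    have "rr Q x y = ram (fst (common_part (qs x) (qs y)))" using xy by (simp add: rr_def qs_def)
    then show "int (rr Q x y) dvd t \<longleftrightarrow> {k\<in>levels (qs x). fission_exp (qs x) (qs y) < k \<and> \<not> II t k} = {}"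
      using pair_dvd[OF exq[OF xy(1)] exq[OF xy(2)] dist[OF xy] comp[OF xy(1,2)]] by simp
  qed
  have congI: "[d x = d y] (mod rr Q x y) \<longleftrightarrow> int (rr Q x y) dvd (int (d x) - int (d y))" for x y
    by (simp add: cong_int_iff[symmetric] cong_iff_dvd_diff)
  have actlen: "length (act (\<pi>, d) Q) = m" by (simp add: act_def m_def)
  have actnth: "\<And>i. i < m \<Longrightarrow> act (\<pi>, d) Q ! i = (fst (Q ! \<pi> i), rot (int (d (\<pi> i))) (qs (\<pi> i)))"
    by (simp add: act_def m_def qs_def sigma_pow_rot)
  have PE: "pit_equiv P Q \<longleftrightarrow> length P = m \<and> (\<forall>i<m. fst (P ! i) = fst (Q ! i)) \<and>
     (\<forall>i<m. \<forall>j<m. \<forall>k\<le>ram (qs i). \<forall>l\<le>ram (qs j).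
        slope ((sigma ^^ k) (snd (P ! i)) - (sigma ^^ l) (snd (P ! j))) =
        slope ((sigma ^^ k) (qs i) - (sigma ^^ l) (qs j)))" for P
    by (simp add: pit_equiv_def m_def qs_def)
  have W: "(\<pi>, d) \<in> WQ Q \<longleftrightarrow> (\<forall>i<m. \<forall>j<m. [d i = d j] (mod rr Q i j))"
    using assms(2) by (simp add: WQ_def m_def)
  have actslope: "\<And>i j k l. i < m \<Longrightarrow> j < m \<Longrightarrow>
      slope ((sigma ^^ k) (snd (act (\<pi>, d) Q ! i)) - (sigma ^^ l) (snd (act (\<pi>, d) Q ! j)))
      = slope (rot (int k + int (d (\<pi> i))) (qs (\<pi> i)) - rot (int l + int (d (\<pi> j))) (qs (\<pi> j)))"
    by (simp add: actnth sigma_pow_rot rot_add)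
  show ?thesis
  proof
    assume "\<exists>a\<in>BQ Q. act (\<pi>, d) Q = Q_a Q a"
    then have pe: "pit_equiv (act (\<pi>, d) Q) Q" by (auto simp: BQ_def)
    have "\<forall>i<m. \<forall>j<m. [d i = d j] (mod rr Q i j)"
    proof (intro allI impI)
      fix i j assume i: "i < m" and j: "j < m"
      show "[d i = d j] (mod rr Q i j)"
      proof (cases "i = j")
        case True then show ?thesis by simp
      next
        case False
        obtain i0 where i0: "i0 < m" "\<pi> i0 = i" using psurj[OF i] by blast
        obtain j0 where j0: "j0 < m" "\<pi> j0 = j" using psurj[OF j] by blast
        have ij0: "i0 \<noteq> j0" using False i0 j0 by blast
        have "slope ((sigma ^^ 0) (snd (act (\<pi>, d) Q ! i0)) - (sigma ^^ 0) (snd (act (\<pi>, d) Q ! j0)))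
            = slope ((sigma ^^ 0) (qs i0) - (sigma ^^ 0) (qs j0))"
          using pe i0 j0 unfolding PE by blast
        then have "slope (rot (int (d i)) (qs i) - rot (int (d j)) (qs j)) = slope (rot 0 (qs i0) - rot 0 (qs j0))"
          using actslope[OF i0(1) j0(1), of 0 0] i0 j0 by simp
        then have "GL (levels (qs i)) (fission_exp (qs i) (qs j)) (int (d i) - int (d j))
              = GL (levels (qs i0)) (fission_exp (qs i0) (qs j0)) (0 - 0)"
        proof -
          have "slope (rot 0 (qs i0) - rot 0 (qs j0)) = GL (levels (qs i0)) (fission_exp (qs i0) (qs j0)) (0 - 0)"
            by (rule FORMd[OF i0(1) j0(1) ij0])
          moreover have "slope (rot (int (d i)) (qs i) - rot (int (d j)) (qs j))
              = GL (levels (qs i)) (fission_exp (qs i) (qs j)) (int (d i) - int (d j))"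
            by (rule FORMd[OF i j False])
          ultimately show ?thesis using \<open>slope (rot (int (d i)) (qs i) - rot (int (d j)) (qs j)) = slope (rot 0 (qs i0) - rot 0 (qs j0))\<close>
            by simp
        qed
        also have "\<dots> = fission_exp (qs i) (qs j)" using autf[OF i0(1) j0(1) ij0] i0 j0 GL_zero by simp
        finally have "{k\<in>levels (qs i). fission_exp (qs i) (qs j) < k \<and> \<not> II (int (d i) - int (d j)) k} = {}"
          using GL_eq_f finite_levels[OF exq[OF i]] by blast
        then show ?thesis using DVD[OF i j False] congI by simp
      qed
    qed
    then show "(\<pi>, d) \<in> WQ Q" using W by simp
  next
    assume "(\<pi>, d) \<in> WQ Q"
    then have WC: "\<forall>i<m. \<forall>j<m. [d i = d j] (mod rr Q i j)" using W by simp
    define r where "r = ramQ Q"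
    define F where "F i = rot (int (d (\<pi> i))) (qs (\<pi> i))" for i
    define a where "a i j = F i (of_nat j / of_nat r)" for i j
    have rset: "\<And>x. x < m \<Longrightarrow> ram (qs x) \<in> set (map (\<lambda>p. ram (snd p)) Q)"
      by (simp add: m_def qs_def)
    have rdvd: "\<And>x. x < m \<Longrightarrow> ram (qs x) dvd r"
      unfolding r_def ramQ_def using rset by (intro dvd_Lcm) auto
    have rpos: "r > 0"
    proof -
      have "0 \<notin> set (map (\<lambda>p. ram (snd p)) Q)"
      proof
        assume "0 \<in> set (map (\<lambda>p. ram (snd p)) Q)"
        then obtain x where x: "x < m" "ram (qs x) = 0"
          by (auto simp: in_set_conv_nth m_def qs_def)
        then show False using ram_props[OF fin_expo[OF exq[OF x(1)]]] by simp
      qed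
      moreover have "finite (set (map (\<lambda>p. ram (snd p)) Q))" by (rule finite_set)
      ultimately have "Lcm (set (map (\<lambda>p. ram (snd p)) Q)) \<noteq> 0" using Lcm_0_iff by blast
      then show ?thesis unfolding r_def ramQ_def using not_gr0 by blast
    qed
    have mslope: "\<And>x. x < m \<Longrightarrow> slope (qs x) \<le> maxslope Q"
    proof -
      fix x assume x: "x < m"
      then have "Q \<noteq> []" by (auto simp: m_def)
      moreover have "slope (qs x) \<in> set (map (\<lambda>p. slope (snd p)) Q)" using x by (simp add: m_def qs_def)
      ultimately show "slope (qs x) \<le> maxslope Q" by (simp add: maxslope_def)
    qed
    have Frep: "\<And>i. i < m \<Longrightarrow> (\<Sum>j\<in>{1..sQ Q}. monom_ef (a i j) (of_nat j / of_nat (ramQ Q))) = F i"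
    proof -
      fix i assume i: "i < m"
      let ?x = "\<pi> i"
      have x: "?x < m" using pim[OF i] .
      have Fe: "is_expfac (F i)" using exq[OF x] by (simp add: F_def is_expfac_def rot_nz)
      have b: "\<forall>k\<in>expo (F i). of_nat r * k \<in> \<int> \<and> k \<le> maxslope Q"
      proof
        fix k assume "k \<in> expo (F i)"
        then have k: "k \<in> expo (qs ?x)" by (simp add: F_def)
        obtain c0 where c0: "r = ram (qs ?x) * c0" using rdvd[OF x] by (auto elim: dvdE)
        have "k * of_nat (ram (qs ?x)) \<in> \<int>" using ram_props[OF fin_expo[OF exq[OF x]]] k by blast
        moreover have "of_nat r * k = of_nat c0 * (k * of_nat (ram (qs ?x)))" by (simp add: c0 algebra_simps)
        ultimately have "of_nat r * k \<in> \<int>" by (metis Ints_mult Ints_of_nat)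
        moreover have "k \<le> slope (qs ?x)" using slope_ge[OF fin_expo[OF exq[OF x]]] k by (simp add: expo_def)
        ultimately show "of_nat r * k \<in> \<int> \<and> k \<le> maxslope Q" using mslope[OF x] by simp
      qed
      show "(\<Sum>j\<in>{1..sQ Q}. monom_ef (a i j) (of_nat j / of_nat (ramQ Q))) = F i"
        using REP[OF rpos Fe b] by (simp add: a_def sQ_def r_def)
    qed
    have eqa: "act (\<pi>, d) Q = Q_a Q a"
    proof (rule nth_equalityI)
      show "length (act (\<pi>, d) Q) = length (Q_a Q a)" by (simp add: actlen Q_a_def m_def)
      fix i assume "i < length (act (\<pi>, d) Q)"
      then have i: "i < m" by (simp add: actlen)
      have "Q_a Q a ! i = (fst (Q ! i), F i)" using Frep[OF i] i by (simp add: Q_a_def m_def)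
      then show "act (\<pi>, d) Q ! i = Q_a Q a ! i" using actnth[OF i] autn[OF i] by (simp add: F_def)
    qed
    have "pit_equiv (act (\<pi>, d) Q) Q"
      unfolding PE
    proof (intro conjI allI impI)
      show "length (act (\<pi>, d) Q) = m" by (rule actlen)
      fix i assume i: "i < m"
      show "fst (act (\<pi>, d) Q ! i) = fst (Q ! i)" using actnth[OF i] autn[OF i] by simp
      fix j k l assume j: "j < m" and "k \<le> ram (qs i)" "l \<le> ram (qs j)"
      have rhs: "slope ((sigma ^^ k) (qs i) - (sigma ^^ l) (qs j)) = slope (rot (int k) (qs i) - rot (int l) (qs j))"
        by (simp add: sigma_pow_rot)
      show "slope ((sigma ^^ k) (snd (act (\<pi>, d) Q ! i)) - (sigma ^^ l) (snd (act (\<pi>, d) Q ! j))) =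
            slope ((sigma ^^ k) (qs i) - (sigma ^^ l) (qs j))"
        unfolding actslope[OF i j] rhs
      proof (cases "i = j")
        case True
        show "slope (rot (int k + int (d (\<pi> i))) (qs (\<pi> i)) - rot (int l + int (d (\<pi> j))) (qs (\<pi> j))) =
              slope (rot (int k) (qs i) - rot (int l) (qs j))"
          using FORMs[OF pim[OF i]] FORMs[OF i] autl[OF i] True by simp
      next
        case False
        have pij: "\<pi> i \<noteq> \<pi> j" using False pinj by blast
        define \<delta> where "\<delta> = int (d (\<pi> i)) - int (d (\<pi> j))"
        have "[d (\<pi> i) = d (\<pi> j)] (mod rr Q (\<pi> i) (\<pi> j))" using WC pim i j by blast
        then have "{k\<in>levels (qs (\<pi> i)). fission_exp (qs (\<pi> i)) (qs (\<pi> j)) < k \<and> \<not> II \<delta> k} = {}"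
          using DVD[OF pim[OF i] pim[OF j] pij] congI by (simp add: \<delta>_def)
        then have sh: "\<forall>l\<in>levels (qs i). fission_exp (qs i) (qs j) < l \<longrightarrow> II \<delta> l"
          using autl[OF i] autf[OF i j False] by auto
        have "slope (rot (int k + int (d (\<pi> i))) (qs (\<pi> i)) - rot (int l + int (d (\<pi> j))) (qs (\<pi> j)))
            = GL (levels (qs i)) (fission_exp (qs i) (qs j)) ((int k - int l) + \<delta>)"
          using FORMd[OF pim[OF i] pim[OF j] pij] autl[OF i] autf[OF i j False]
          by (simp add: \<delta>_def algebra_simps)
        also have "\<dots> = GL (levels (qs i)) (fission_exp (qs i) (qs j)) (int k - int l)"
          by (rule GL_shift[OF sh])
        also have "\<dots> = slope (rot (int k) (qs i) - rot (int l) (qs j))"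
          using FORMd[OF i j False] by simp
        finally show "slope (rot (int k + int (d (\<pi> i))) (qs (\<pi> i)) - rot (int l + int (d (\<pi> j))) (qs (\<pi> j))) =
              slope (rot (int k) (qs i) - rot (int l) (qs j))" .
      qed
    qed
    then have "a \<in> BQ Q" using eqa by (simp add: BQ_def)
    then show "\<exists>a\<in>BQ Q. act (\<pi>, d) Q = Q_a Q a" using eqa by blast
  qed
qed

end
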